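(* The set $\mathcal{I}_{\mathrm{str}}(\Lambda)$ has the cardinality of the continuum.
   Context: Let $\mathbf{2}=\{0,1\}$. A partial function of arity $n$ on $\mathbf{2}$ is a map $f:\operatorname{dom} f\to\mathbf{2}$ with $\operatorname{dom} f\subseteq \mathbf{2}^n$; it is total if $\operatorname{dom} f=\mathbf{2}^n$. $P_{\mathbf{2}}$ is the set of all partial functions, $O_{\mathbf{2}}$ the set of total ones. Composition $F=f(g_1,\dots,g_n)$ is given by $F(\mathbf{x})=f(g_1(\mathbf{x}),\dots,g_n(\mathbf{x}))$ on $\operatorname{dom} F=\{\mathbf{x}\in\bigcap_i\operatorname{dom} g_i : (g_1(\mathbf{x}),\dots,g_n(\mathbf{x}))\in\operatorname{dom} f\}$. A partial clone is a composition-closed subset of $P_{\mathbf{2}}$ containing all projections; a total clone is one contained in $O_{\mathbf{2}}$. A partial clone $X$ is strong if it contains every restriction of each of its members. For a total clone $C$, $\mathcal{I}_{\mathrm{str}}(C)$ is the set of all strong partial clones $X$ with $X\cap O_{\mathbf{2}}=C$. $\Lambda$ is the total clone generated by the binary conjunction $\land$ and the constant functions $c_0,c_1$. *)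

theory Defs
  imports Complex_Main "HOL-Library.Equipollence"
begin

text \<open>A partial Boolean function is represented as a pair (n, f) where n is its arity
  and f maps argument tuples (bool lists, True = 1) to an optional value; the domain of f
  (the set of lists where f is defined) must consist of lists of length n. Arities are
  at least 1, as usual in clone theory.\<close>

type_synonym pfun = "nat \<times> (bool list \<Rightarrow> bool option)"

definition arity :: "pfun \<Rightarrow> nat" where "arity p = fst p"
definition fn :: "pfun \<Rightarrow> bool list \<Rightarrow> bool option" where "fn p = snd p"

definition P2 :: "pfun set" where
  "P2 = {p. arity p \<ge> 1 \<and> (\<forall>xs. fn p xs \<noteq> None \<longrightarrow> length xs = arity p)}"

definition O2 :: "pfun set" where
  "O2 = {p \<in> P2. \<forall>xs. length xs = arity p \<longrightarrow> fn p xs \<noteq> None}"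

definition comp :: "nat \<Rightarrow> pfun \<Rightarrow> pfun list \<Rightarrow> pfun" where
  "comp m f gs = (m, \<lambda>xs.
     if length xs = m \<and> (\<forall>g\<in>set gs. fn g xs \<noteq> None)
     then fn f (map (\<lambda>g. the (fn g xs)) gs) else None)"

definition proj :: "nat \<Rightarrow> nat \<Rightarrow> pfun" where
  "proj m i = (m, \<lambda>xs. if length xs = m then Some (xs ! i) else None)"

definition partial_clone :: "pfun set \<Rightarrow> bool" where
  "partial_clone X \<longleftrightarrow> X \<subseteq> P2
     \<and> (\<forall>m i. 1 \<le> m \<and> i < m \<longrightarrow> proj m i \<in> X)
     \<and> (\<forall>f\<in>X. \<forall>m gs. m \<ge> 1 \<and> length gs = arity f \<and> set gs \<subseteq> X
            \<and> (\<forall>g\<in>set gs. arity g = m) \<longrightarrow> comp m f gs \<in> X)"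

definition restriction :: "pfun \<Rightarrow> pfun \<Rightarrow> bool" where
  "restriction g f \<longleftrightarrow> arity g = arity f \<and> fn g \<subseteq>\<^sub>m fn f"

definition strong :: "pfun set \<Rightarrow> bool" where
  "strong X \<longleftrightarrow> (\<forall>f\<in>X. \<forall>g. restriction g f \<longrightarrow> g \<in> X)"

definition I_str :: "pfun set \<Rightarrow> pfun set set" where
  "I_str C = {X. partial_clone X \<and> strong X \<and> X \<inter> O2 = C}"

definition clone_gen :: "pfun set \<Rightarrow> pfun set" where
  "clone_gen S = \<Inter>{X. partial_clone X \<and> S \<subseteq> X}"

definition conj2 :: pfun where
  "conj2 = (2, \<lambda>xs. if length xs = 2 then Some (xs ! 0 \<and> xs ! 1) else None)"

definition const1 :: "bool \<Rightarrow> pfun" where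
  "const1 b = (1, \<lambda>xs. if length xs = 1 then Some b else None)"

definition Lambda :: "pfun set" where
  "Lambda = clone_gen {conj2, const1 False, const1 True}"

end

theory Submission
  imports Defs "HOL-Analysis.Abstract_Topology_2"
begin

definition pres :: "pfun \<Rightarrow> ('i \<Rightarrow> bool) set \<Rightarrow> bool" where
  "pres f R \<longleftrightarrow> (\<forall>r. (\<forall>i. fn f (r i) \<noteq> None) \<longrightarrow> (\<forall>c<arity f. (\<lambda>i. r i ! c) \<in> R)
      \<longrightarrow> (\<lambda>i. the (fn f (r i))) \<in> R)"

lemma pres_proj:
  assumes "i < m" shows "pres (proj m i) R"
  unfolding pres_def
proof (intro allI impI)
  fix r :: "'a \<Rightarrow> bool list"
  assume d: "\<forall>j. fn (proj m i) (r j) \<noteq> None" and c: "\<forall>c<arity (proj m i). (\<lambda>j. r j ! c) \<in> R"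
  have "(\<lambda>j. r j ! i) \<in> R" using c assms by (simp add: arity_def proj_def)
  moreover have "(\<lambda>j. the (fn (proj m i) (r j))) = (\<lambda>j. r j ! i)"
    using d by (auto simp: fn_def proj_def split: if_splits)
  ultimately show "(\<lambda>j. the (fn (proj m i) (r j))) \<in> R" by simp
qed

lemma pres_comp:
  assumes pf: "pres f R" and pg: "\<forall>g\<in>set gs. pres g R" and len: "length gs = arity f"
    and ar: "\<forall>g\<in>set gs. arity g = m"
  shows "pres (comp m f gs) R"
  unfolding pres_def
proof (intro allI impI)
  fix r :: "'a \<Rightarrow> bool list"
  assume d: "\<forall>j. fn (comp m f gs) (r j) \<noteq> None" and c: "\<forall>c<arity (comp m f gs). (\<lambda>j. r j ! c) \<in> R"
  have d1: "\<And>j. length (r j) = m \<and> (\<forall>g\<in>set gs. fn g (r j) \<noteq> None)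
      \<and> fn f (map (\<lambda>g. the (fn g (r j))) gs) \<noteq> None"
  proof -
    fix j
    have "fn (comp m f gs) (r j) \<noteq> None" using d by blast
    then show "length (r j) = m \<and> (\<forall>g\<in>set gs. fn g (r j) \<noteq> None)
      \<and> fn f (map (\<lambda>g. the (fn g (r j))) gs) \<noteq> None"
      by (simp add: comp_def fn_def split: if_splits)
  qed
  have cm: "\<forall>c<m. (\<lambda>j. r j ! c) \<in> R" using c by (simp add: comp_def arity_def)
  have colg: "\<And>g. g \<in> set gs \<Longrightarrow> (\<lambda>j. the (fn g (r j))) \<in> R"
  proof -
    fix g assume g: "g \<in> set gs"
    have "pres g R" using pg g by blast
    then show "(\<lambda>j. the (fn g (r j))) \<in> R"
      unfolding pres_def using d1 cm ar g by auto
  qed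
  define r' where "r' = (\<lambda>j. map (\<lambda>g. the (fn g (r j))) gs)"
  have "(\<lambda>j. the (fn f (r' j))) \<in> R"
    using pf unfolding pres_def
  proof (elim allE impE)
    show "\<forall>j. fn f (r' j) \<noteq> None" using d1 by (simp add: r'_def)
    show "\<forall>c<arity f. (\<lambda>j. r' j ! c) \<in> R"
    proof (intro allI impI)
      fix c assume "c < arity f"
      then have "c < length gs" using len by simp
      then have "(\<lambda>j. r' j ! c) = (\<lambda>j. the (fn (gs ! c) (r j)))" by (simp add: r'_def)
      then show "(\<lambda>j. r' j ! c) \<in> R" using colg \<open>c < length gs\<close> by simp
    qed
  qed
  moreover have "(\<lambda>j. the (fn (comp m f gs) (r j))) = (\<lambda>j. the (fn f (r' j)))"
    using d1 by (simp add: comp_def fn_def r'_def)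
  ultimately show "(\<lambda>j. the (fn (comp m f gs) (r j))) \<in> R" by simp
qed

lemma pres_restr:
  assumes "restriction g f" "pres f R" shows "pres g R"
  unfolding pres_def
proof (intro allI impI)
  fix r :: "'a \<Rightarrow> bool list"
  assume d: "\<forall>j. fn g (r j) \<noteq> None" and c: "\<forall>c<arity g. (\<lambda>j. r j ! c) \<in> R"
  have sub: "\<And>j. fn f (r j) = fn g (r j)"
    using d assms(1) unfolding restriction_def map_le_def by (metis domIff)
  have "(\<lambda>j. the (fn f (r j))) \<in> R"
    using assms(2) unfolding pres_def using d c sub assms(1) restriction_def by metis
  then show "(\<lambda>j. the (fn g (r j))) \<in> R" using sub by simp
qed

definition H :: "(nat \<Rightarrow> bool) set" where
  "H = {x. x 1 \<and> x 2 \<longrightarrow> x 0}"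

definition rho :: "nat \<Rightarrow> (nat \<times> nat \<Rightarrow> bool) set" where
  "rho n = {x. (x (0,0) \<and> (\<forall>i j. i<n \<longrightarrow> j<n \<longrightarrow> i\<noteq>j \<longrightarrow> x (i,j)))
     \<or> (\<not> x (0,0) \<and> (\<exists>A. A \<subseteq> {..<n} \<and> A \<noteq> {} \<and>
           (\<forall>i j. i<n \<longrightarrow> j<n \<longrightarrow> i\<noteq>j \<longrightarrow> x (i,j) = (i \<notin> A \<and> j \<notin> A))))}"

definition XS :: "nat set \<Rightarrow> pfun set" where
  "XS S = {f \<in> P2. pres f H \<and> (\<forall>n. n \<notin> S \<longrightarrow> pres f (rho (n+5)))}"

lemma proj_P2: "1 \<le> m \<Longrightarrow> proj m i \<in> P2"
  by (simp add: P2_def proj_def arity_def fn_def)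

lemma comp_P2: "1 \<le> m \<Longrightarrow> comp m f gs \<in> P2"
  by (simp add: P2_def comp_def arity_def fn_def)

lemma restr_P2: "restriction g f \<Longrightarrow> f \<in> P2 \<Longrightarrow> g \<in> P2"
proof -
  assume r: "restriction g f" and f: "f \<in> P2"
  have a: "arity g = arity f" and le: "fn g \<subseteq>\<^sub>m fn f" using r by (auto simp: restriction_def)
  have "length xs = arity g" if "fn g xs \<noteq> None" for xs
  proof -
    have "xs \<in> dom (fn g)" using that by blast
    then have "fn f xs = fn g xs" using le unfolding map_le_def by auto
    then show ?thesis using f that a unfolding P2_def by auto
  qed
  then show "g \<in> P2" using f a unfolding P2_def by auto
qed

lemma XS_clone: "partial_clone (XS S)"
  unfolding partial_clone_def
proof (intro conjI allI impI ballI)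
  show "XS S \<subseteq> P2" by (auto simp: XS_def)
next
  fix m i :: nat assume "1 \<le> m \<and> i < m"
  then show "proj m i \<in> XS S" by (simp add: XS_def proj_P2 pres_proj)
next
  fix f m gs assume f: "f \<in> XS S" and h: "1 \<le> m \<and> length gs = arity f \<and> set gs \<subseteq> XS S \<and> (\<forall>g\<in>set gs. arity g = m)"
  show "comp m f gs \<in> XS S"
    unfolding XS_def using f h
    by (auto simp: XS_def comp_P2 intro!: pres_comp)
qed

lemma XS_strong: "strong (XS S)"
  unfolding strong_def
proof (intro ballI allI impI)
  fix f g assume "f \<in> XS S" "restriction g f"
  then have "f \<in> P2" "pres f H" "\<forall>n. n \<notin> S \<longrightarrow> pres f (rho (n+5))" "restriction g f"
    unfolding XS_def by auto
  moreover have "pres g (rho (n+5))" if "n \<notin> S" for n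
    using pres_restr[of g f "rho (n+5)"] calculation that by blast
  ultimately show "g \<in> XS S" unfolding XS_def using restr_P2[of g f] pres_restr[of g f H] by auto
qed

lemma H_conj: "x \<in> H \<Longrightarrow> y \<in> H \<Longrightarrow> (\<lambda>i. x i \<and> y i) \<in> H"
  by (auto simp: H_def)

lemma rho_conj:
  assumes "x \<in> rho n" "y \<in> rho n" shows "(\<lambda>i. x i \<and> y i) \<in> rho n"
proof -
  consider (a) "x (0,0)" "\<forall>i j. i<n \<longrightarrow> j<n \<longrightarrow> i\<noteq>j \<longrightarrow> x (i,j)"
    | (b) A where "\<not> x (0,0)" "A \<subseteq> {..<n}" "A \<noteq> {}" "\<forall>i j. i<n \<longrightarrow> j<n \<longrightarrow> i\<noteq>j \<longrightarrow> x (i,j) = (i \<notin> A \<and> j \<notin> A)"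
    using assms(1) unfolding rho_def by blast
  note xc = this
  consider (c) "y (0,0)" "\<forall>i j. i<n \<longrightarrow> j<n \<longrightarrow> i\<noteq>j \<longrightarrow> y (i,j)"
      | (d) B where "\<not> y (0,0)" "B \<subseteq> {..<n}" "B \<noteq> {}" "\<forall>i j. i<n \<longrightarrow> j<n \<longrightarrow> i\<noteq>j \<longrightarrow> y (i,j) = (i \<notin> B \<and> j \<notin> B)"
      using assms(2) unfolding rho_def by blast
  note yc = this
  show ?thesis
  proof (cases rule: xc)
    case a
    show ?thesis
    proof (cases rule: yc)
      case c then show ?thesis using a unfolding rho_def by auto
    next
      case (d B)
      show ?thesis unfolding rho_def
        apply (intro CollectI disjI2 conjI)
        using d apply simp
        apply (rule exI[of _ "B"])
        using a d by auto
    qed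
  next
    case (b A)
    show ?thesis
    proof (cases rule: yc)
      case c
      show ?thesis unfolding rho_def
        apply (intro CollectI disjI2 conjI)
        using b apply simp
        apply (rule exI[of _ "A"])
        using b c by auto
    next
      case (d B)
      show ?thesis unfolding rho_def
        apply (intro CollectI disjI2 conjI)
        using b apply simp
        apply (rule exI[of _ "A \<union> B"])
        using b d by auto
    qed
  qed
qed

lemma const_H: "(\<lambda>i. b) \<in> H" by (simp add: H_def)

lemma const_rho: "1 \<le> n \<Longrightarrow> (\<lambda>i. b) \<in> rho n"
  unfolding rho_def
  apply (cases b)
   apply simp
  apply simp
  apply (rule exI[of _ "{..<n}"])
  by (auto simp: lessThan_empty_iff)

lemma pres_const1:
  assumes "(\<lambda>i. b) \<in> R" shows "pres (const1 b) R"
  unfolding pres_def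
proof (intro allI impI)
  fix r :: "'a \<Rightarrow> bool list"
  assume d: "\<forall>i. fn (const1 b) (r i) \<noteq> None"
  then have "(\<lambda>i. the (fn (const1 b) (r i))) = (\<lambda>i. b)"
    by (auto simp: const1_def fn_def split: if_splits)
  then show "(\<lambda>i. the (fn (const1 b) (r i))) \<in> R" using assms by simp
qed

lemma pres_conj2:
  assumes "\<And>x y. x \<in> R \<Longrightarrow> y \<in> R \<Longrightarrow> (\<lambda>i. x i \<and> y i) \<in> R" shows "pres conj2 R"
  unfolding pres_def
proof (intro allI impI)
  fix r :: "'a \<Rightarrow> bool list"
  assume d: "\<forall>i. fn conj2 (r i) \<noteq> None" and c: "\<forall>c<arity conj2. (\<lambda>i. r i ! c) \<in> R"
  have "(\<lambda>i. the (fn conj2 (r i))) = (\<lambda>i. r i ! 0 \<and> r i ! 1)"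
    using d by (auto simp: conj2_def fn_def split: if_splits)
  moreover have "(\<lambda>i. r i ! 0) \<in> R" "(\<lambda>i. r i ! 1) \<in> R" using c by (auto simp: conj2_def arity_def)
  ultimately show "(\<lambda>i. the (fn conj2 (r i))) \<in> R" using assms by simp
qed

lemma gens_P2: "conj2 \<in> P2" "const1 b \<in> P2"
  by (auto simp: P2_def conj2_def const1_def arity_def fn_def)

lemma Lambda_sub_XS: "Lambda \<subseteq> XS S"
proof -
  have "{conj2, const1 False, const1 True} \<subseteq> XS S"
    by (auto simp: XS_def gens_P2 intro!: pres_conj2 pres_const1 H_conj rho_conj const_H const_rho)
  then show ?thesis unfolding Lambda_def clone_gen_def using XS_clone by blast
qed

lemma O2_clone: "partial_clone O2"
  unfolding partial_clone_def
proof (intro conjI allI impI ballI)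
  show "O2 \<subseteq> P2" by (auto simp: O2_def)
next
  fix m i :: nat assume "1 \<le> m \<and> i < m"
  then show "proj m i \<in> O2" by (simp add: O2_def proj_P2) (simp add: proj_def fn_def arity_def)
next
  fix f m gs assume f: "f \<in> O2" and h: "1 \<le> m \<and> length gs = arity f \<and> set gs \<subseteq> O2 \<and> (\<forall>g\<in>set gs. arity g = m)"
  show "comp m f gs \<in> O2"
    unfolding O2_def
  proof (intro CollectI conjI allI impI)
    show "comp m f gs \<in> P2" using h comp_P2 by blast
    fix xs :: "bool list" assume "length xs = arity (comp m f gs)"
    then have l: "length xs = m" by (simp add: comp_def arity_def)
    have g: "\<forall>g\<in>set gs. fn g xs \<noteq> None" using h l unfolding O2_def by auto
    have "fn f (map (\<lambda>g. the (fn g xs)) gs) \<noteq> None" using f h unfolding O2_def by auto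
    then show "fn (comp m f gs) xs \<noteq> None" using g l by (simp add: comp_def fn_def)
  qed
qed

lemma Lambda_sub_O2: "Lambda \<subseteq> O2"
proof -
  have "conj2 \<in> O2" "const1 b \<in> O2" for b
    using gens_P2 by (simp_all add: O2_def) (simp_all add: conj2_def const1_def arity_def fn_def)
  then have "{conj2, const1 False, const1 True} \<subseteq> O2" by blast
  then show ?thesis unfolding Lambda_def clone_gen_def using O2_clone by blast
qed

definition fz :: "nat \<Rightarrow> pfun" where
  "fz k = (k, \<lambda>xs. if length xs = k \<and> card {c. c<k \<and> \<not> xs!c} = 2 then Some True
                   else if xs = replicate k False then Some False else None)"

definition Zs :: "nat \<Rightarrow> bool list \<Rightarrow> nat set" where
  "Zs k xs = {c. c<k \<and> \<not> xs!c}"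

lemma Zs_fin: "finite (Zs k xs)" "Zs k xs \<subseteq> {..<k}"
  by (auto simp: Zs_def)

lemma ne_lessThan: "card A < k \<Longrightarrow> A \<noteq> {..<k}"
  by (metis card_lessThan less_irrefl)

lemma ex_out: "A \<noteq> {..<k} \<Longrightarrow> A \<subseteq> {..<k} \<Longrightarrow> \<exists>c<k. c \<notin> A"
  by blast

lemma fz_arity: "arity (fz k) = k" by (simp add: fz_def arity_def)

lemma fz_dom: "fn (fz k) xs \<noteq> None \<longleftrightarrow> length xs = k \<and> (card (Zs k xs) = 2 \<or> xs = replicate k False)"
  by (auto simp: fz_def fn_def Zs_def)

lemma fz_val: "fn (fz k) xs \<noteq> None \<Longrightarrow> the (fn (fz k) xs) = (card (Zs k xs) = 2)"
  by (auto simp: fz_def fn_def Zs_def)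

lemma rep_Zs: "length xs = k \<Longrightarrow> xs = replicate k False \<longleftrightarrow> Zs k xs = {..<k}"
  by (auto simp: Zs_def list_eq_iff_nth_eq)

lemma fz_P2: "1 \<le> k \<Longrightarrow> fz k \<in> P2"
  unfolding P2_def using fz_dom by (auto simp: fz_arity)

lemma fz_dom_cases:
  assumes "fn (fz k) xs \<noteq> None"
  shows "length xs = k" "card (Zs k xs) = 2 \<or> Zs k xs = {..<k}"
  using assms rep_Zs fz_dom by auto

lemma pres_fz_H:
  assumes k: "5 \<le> k" shows "pres (fz k) H"
  unfolding pres_def
proof (intro allI impI)
  fix r :: "nat \<Rightarrow> bool list"
  assume d: "\<forall>i. fn (fz k) (r i) \<noteq> None" and c: "\<forall>c<arity (fz k). (\<lambda>i. r i ! c) \<in> H"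
  have col: "\<And>c. c < k \<Longrightarrow> r 1 ! c \<and> r 2 ! c \<longrightarrow> r 0 ! c" using c by (auto simp: fz_arity H_def)
  have "card (Zs k (r 1)) = 2 \<and> card (Zs k (r 2)) = 2 \<longrightarrow> card (Zs k (r 0)) = 2"
  proof
    assume h: "card (Zs k (r 1)) = 2 \<and> card (Zs k (r 2)) = 2"
    have "card (Zs k (r 1) \<union> Zs k (r 2)) \<le> 4"
      using h card_Un_le[of "Zs k (r 1)" "Zs k (r 2)"] by simp
    then have "Zs k (r 1) \<union> Zs k (r 2) \<noteq> {..<k}" using k by (intro ne_lessThan) simp
    moreover have "Zs k (r 1) \<union> Zs k (r 2) \<subseteq> {..<k}" using Zs_fin(2) by blast
    ultimately obtain c where "c < k" "c \<notin> Zs k (r 1) \<union> Zs k (r 2)" using ex_out by blast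
    then have "r 0 ! c" using col by (auto simp: Zs_def)
    then have "Zs k (r 0) \<noteq> {..<k}" using \<open>c < k\<close> by (auto simp: Zs_def)
    then show "card (Zs k (r 0)) = 2" using fz_dom_cases(2)[of k "r 0"] d by blast
  qed
  then show "(\<lambda>i. the (fn (fz k) (r i))) \<in> H" using d fz_val by (simp add: H_def)
qed

lemma not_pres_fz:
  assumes n: "5 \<le> n" shows "\<not> pres (fz n) (rho n)"
proof
  assume p: "pres (fz n) (rho n)"
  define r where "r = (\<lambda>(i::nat,j::nat). if i<n \<and> j<n \<and> i\<noteq>j then map (\<lambda>c. c \<noteq> i \<and> c \<noteq> j) [0..<n]
       else replicate n False)"
  have Zr: "Zs n (r (i,j)) = {i,j}" if "i<n" "j<n" "i\<noteq>j" for i j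
    using that by (auto simp: r_def Zs_def)
  have d: "\<forall>p. fn (fz n) (r p) \<noteq> None"
  proof
    fix p show "fn (fz n) (r p) \<noteq> None"
    proof (cases p)
      case (Pair i j)
      show ?thesis
      proof (cases "i<n \<and> j<n \<and> i\<noteq>j")
        case True
        have "length (r (i,j)) = n" using True by (simp add: r_def)
        then show ?thesis using Zr[of i j] True fz_dom[of n "r (i,j)"] by (simp add: Pair)
      next
        case False
        then have "r (i,j) = replicate n False" using False by (auto simp: r_def)
        then show ?thesis using fz_dom[of n "r (i,j)"] by (simp add: Pair)
      qed
    qed
  qed
  have c: "\<forall>c<arity (fz n). (\<lambda>p. r p ! c) \<in> rho n"
  proof (intro allI impI)
    fix c assume "c < arity (fz n)"
    then have cn: "c < n" by (simp add: fz_arity)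
    show "(\<lambda>p. r p ! c) \<in> rho n" unfolding rho_def
      apply (intro CollectI disjI2 conjI)
      using cn apply (simp add: r_def)
      apply (rule exI[of _ "{c}"])
      using cn by (auto simp: r_def)
  qed
  have o: "(\<lambda>p. the (fn (fz n) (r p))) \<in> rho n" using p d c unfolding pres_def by blast
  have r00: "r (0,0) = replicate n False" by (simp add: r_def)
  then have "Zs n (r (0,0)) = {..<n}" using rep_Zs[of "r (0,0)" n] by simp
  then have "card (Zs n (r (0,0))) \<noteq> 2" using n by simp
  then have o00: "\<not> the (fn (fz n) (r (0,0)))"
    using fz_val[of n "r (0,0)"] d by simp
  have opair: "the (fn (fz n) (r (i,j)))" if "i<n" "j<n" "i\<noteq>j" for i j
    using fz_val[of n "r (i,j)"] d Zr[OF that] that by simp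
  from o o00 obtain A where A: "A \<subseteq> {..<n}" "A \<noteq> {}"
    "\<forall>i j. i<n \<longrightarrow> j<n \<longrightarrow> i\<noteq>j \<longrightarrow> the (fn (fz n) (r (i,j))) = (i \<notin> A \<and> j \<notin> A)"
    unfolding rho_def by auto
  then obtain a where a: "a \<in> A" "a < n" by blast
  define j where "j = (if a = 0 then 1 else (0::nat))"
  have "j < n" "j \<noteq> a" using n by (auto simp: j_def)
  then have "the (fn (fz n) (r (a,j))) = (a \<notin> A \<and> j \<notin> A)" using A(3) a(2) by metis
  moreover have "the (fn (fz n) (r (a,j)))" using opair[of a j] a(2) \<open>j < n\<close> \<open>j \<noteq> a\<close> by simp
  ultimately show False using a(1) by simp
qed

lemma pres_fz_rho:
  assumes k: "5 \<le> k" and n: "2 \<le> n" and kn: "k \<noteq> n"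
  shows "pres (fz k) (rho n)"
  unfolding pres_def
proof (intro allI impI)
  fix r :: "nat \<times> nat \<Rightarrow> bool list"
  assume d: "\<forall>i. fn (fz k) (r i) \<noteq> None" and c: "\<forall>c<arity (fz k). (\<lambda>i. r i ! c) \<in> rho n"
  have col: "\<And>c. c<k \<Longrightarrow> (\<lambda>i. r i ! c) \<in> rho n" using c by (simp add: fz_arity)
  have dz: "\<And>p. card (Zs k (r p)) = 2 \<or> Zs k (r p) = {..<k}" using fz_dom_cases(2) d by blast
  have val: "\<And>p. the (fn (fz k) (r p)) = (card (Zs k (r p)) = 2)" using fz_val d by blast
  show "(\<lambda>p. the (fn (fz k) (r p))) \<in> rho n"
  proof (cases "card (Zs k (r (0,0))) = 2")
    case True
    then have "Zs k (r (0,0)) \<noteq> {..<k}" using k by (intro ne_lessThan) simp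
    then obtain c where c: "c<k" "c \<notin> Zs k (r (0,0))" using Zs_fin(2) ex_out by blast
    then have "r (0,0) ! c" by (simp add: Zs_def)
    then have all: "\<forall>i j. i<n \<longrightarrow> j<n \<longrightarrow> i\<noteq>j \<longrightarrow> r (i,j) ! c" using col[OF c(1)] unfolding rho_def by auto
    have "card (Zs k (r (i,j))) = 2" if "i<n" "j<n" "i\<noteq>j" for i j
    proof -
      have "c \<notin> Zs k (r (i,j))" using all that by (simp add: Zs_def)
      then have "Zs k (r (i,j)) \<noteq> {..<k}" using c(1) by blast
      then show ?thesis using dz by blast
    qed
    then show ?thesis unfolding rho_def using True val by auto
  next
    case False
    then have Z00: "Zs k (r (0,0)) = {..<k}" using dz by blast
    have z00: "\<not> the (fn (fz k) (r (0,0)))" using val False by simp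
    have "\<forall>c. \<exists>A. c<k \<longrightarrow> (A \<subseteq> {..<n} \<and> A \<noteq> {} \<and> (\<forall>i j. i<n \<longrightarrow> j<n \<longrightarrow> i\<noteq>j \<longrightarrow> r (i,j) ! c = (i \<notin> A \<and> j \<notin> A)))"
    proof
      fix c
      show "\<exists>A. c<k \<longrightarrow> (A \<subseteq> {..<n} \<and> A \<noteq> {} \<and> (\<forall>i j. i<n \<longrightarrow> j<n \<longrightarrow> i\<noteq>j \<longrightarrow> r (i,j) ! c = (i \<notin> A \<and> j \<notin> A)))"
      proof (cases "c < k")
        case True
        then have "\<not> r (0,0) ! c" using Z00 by (auto simp: Zs_def)
        then show ?thesis using col[OF True] unfolding rho_def by auto
      qed simp
    qed
    then obtain AA where AA: "\<And>c. c<k \<Longrightarrow> AA c \<subseteq> {..<n} \<and> AA c \<noteq> {} \<and> (\<forall>i j. i<n \<longrightarrow> j<n \<longrightarrow> i\<noteq>j \<longrightarrow> r (i,j) ! c = (i \<notin> AA c \<and> j \<notin> AA c))"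
      by metis
    define K where "K i = {c. c<k \<and> i \<in> AA c}" for i
    have Zp: "Zs k (r (i,j)) = K i \<union> K j" if "i<n" "j<n" "i\<noteq>j" for i j
      using AA that by (auto simp: Zs_def K_def)
    have Kfin: "finite (K i)" "K i \<subseteq> {..<k}" for i by (auto simp: K_def)
    have dzK: "card (K i \<union> K j) = 2 \<or> K i \<union> K j = {..<k}" if "i<n" "j<n" "i\<noteq>j" for i j
      using dz[of "(i,j)"] Zp[OF that] by simp
    define B where "B = {i. i<n \<and> 3 \<le> card (K i)}"
    have key: "(card (K i \<union> K j) = 2) = (i \<notin> B \<and> j \<notin> B)" if ij: "i<n" "j<n" "i\<noteq>j" for i j
    proof (cases "i \<notin> B \<and> j \<notin> B")
      case True
      then have "card (K i) \<le> 2" "card (K j) \<le> 2" using ij by (auto simp: B_def)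
      then have "card (K i \<union> K j) \<le> 4" using card_Un_le[of "K i" "K j"] by simp
      then have "K i \<union> K j \<noteq> {..<k}" using k by (intro ne_lessThan) simp
      then show ?thesis using dzK[OF ij] True by simp
    next
      case False
      then have "3 \<le> card (K i) \<or> 3 \<le> card (K j)" by (auto simp: B_def)
      moreover have "card (K i) \<le> card (K i \<union> K j)" "card (K j) \<le> card (K i \<union> K j)"
        using Kfin by (auto intro: card_mono)
      ultimately show ?thesis using False by auto
    qed
    have Bne: "B \<noteq> {}"
    proof
      assume B: "B = {}"
      then have small: "\<And>i. i<n \<Longrightarrow> card (K i) \<le> 2" by (force simp: B_def)
      have pair2: "\<And>i j. i<n \<Longrightarrow> j<n \<Longrightarrow> i\<noteq>j \<Longrightarrow> card (K i \<union> K j) = 2" using key B by auto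
      have cover: "\<exists>i<n. c \<in> K i" if ck: "c<k" for c
      proof -
        obtain i where "i \<in> AA c" using AA[OF ck] by blast
        then show ?thesis using AA[OF ck] ck by (auto simp: K_def)
      qed
      have le1: "card (K i) \<le> 1" if i: "i<n" for i
      proof (rule ccontr)
        assume "\<not> card (K i) \<le> 1"
        then have ci: "card (K i) = 2" using small[OF i] by linarith
        have "{..<k} \<subseteq> K i"
        proof
          fix c assume "c \<in> {..<k}"
          then obtain j where j: "j<n" "c \<in> K j" using cover by auto
          show "c \<in> K i"
          proof (cases "j = i")
            case True then show ?thesis using j by simp
          next
            case False
            then have "card (K i) = card (K i \<union> K j)" using pair2[OF i j(1)] ci by auto
            then have "K i = K i \<union> K j" using card_subset_eq[of "K i \<union> K j" "K i"] Kfin by auto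
            then show ?thesis using j by auto
          qed
        qed
        then have "card {..<k} \<le> card (K i)" using card_mono Kfin by blast
        then show False using ci k by simp
      qed
      have other: "\<exists>j<n. j \<noteq> i" for i
        using n by (intro exI[of _ "if i = 0 then 1 else 0"]) auto
      have one: "card (K i) = 1" if i: "i<n" for i
      proof -
        obtain j where j: "j<n" "j\<noteq>i" using other by blast
        have "2 \<le> card (K i) + card (K j)" using pair2[OF i j(1)] j card_Un_le[of "K i" "K j"] by auto
        then show ?thesis using le1[OF i] le1[OF j(1)] by linarith
      qed
      have disj: "K i \<inter> K j = {}" if "i<n" "j<n" "i\<noteq>j" for i j
      proof -
        have "card (K i) + card (K j) = card (K i \<union> K j) + card (K i \<inter> K j)"
          using card_Un_Int Kfin by blast
        then have "card (K i \<inter> K j) = 0" using one that pair2 by simp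
        then show ?thesis using Kfin by simp
      qed
      define sg where "sg i = the_elem (K i)" for i
      have Ks: "K i = {sg i}" if "i<n" for i
        using one[OF that] unfolding sg_def by (metis card_1_singletonE the_elem_eq)
      have inj: "inj_on sg {..<n}"
      proof (rule inj_onI)
        fix i j assume ij: "i \<in> {..<n}" "j \<in> {..<n}" "sg i = sg j"
        show "i = j"
        proof (rule ccontr)
          assume "i \<noteq> j"
          then have "K i \<inter> K j = {}" using disj ij by simp
          moreover have "K i = {sg i}" "K j = {sg j}" using Ks ij by auto
          ultimately show False using ij(3) by simp
        qed
      qed
      have img: "sg ` {..<n} = {..<k}"
      proof
        show "sg ` {..<n} \<subseteq> {..<k}" using Ks Kfin(2) by auto
        show "{..<k} \<subseteq> sg ` {..<n}"
        proof
          fix c assume "c \<in> {..<k}"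
          then obtain i where "i<n" "c \<in> K i" using cover by auto
          then show "c \<in> sg ` {..<n}" using Ks by auto
        qed
      qed
      have "card (sg ` {..<n}) = n" using card_image[OF inj] by simp
      then have "n = k" using img by simp
      then show False using kn by simp
    qed
    have pairs: "the (fn (fz k) (r (i,j))) = (i \<notin> B \<and> j \<notin> B)" if "i<n" "j<n" "i\<noteq>j" for i j
      using val[of "(i,j)"] Zp[OF that] key[OF that] by simp
    show ?thesis unfolding rho_def
      apply (intro CollectI disjI2 conjI)
      using z00 apply simp
      apply (rule exI[of _ B])
      using Bne pairs by (auto simp: B_def)
  qed
qed

definition mk :: "nat \<Rightarrow> (bool list \<Rightarrow> bool) \<Rightarrow> pfun" where
  "mk k P = (k, \<lambda>xs. if length xs = k then Some (P xs) else None)"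

lemma clone_comp:
  assumes "partial_clone X" "f \<in> X" "1 \<le> m" "length gs = arity f" "set gs \<subseteq> X" "\<forall>g\<in>set gs. arity g = m"
  shows "comp m f gs \<in> X"
  using assms unfolding partial_clone_def by blast

lemma clone_proj:
  assumes "partial_clone X" "1 \<le> m" "i < m" shows "proj m i \<in> X"
  using assms unfolding partial_clone_def by blast

lemma mk_const:
  assumes X: "partial_clone X" "const1 b \<in> X" and k: "1 \<le> k"
  shows "mk k (\<lambda>_. b) \<in> X"
proof -
  have "comp k (const1 b) [proj k 0] \<in> X"
    using X k clone_proj[OF X(1) k, of 0]
    by (intro clone_comp) (auto simp: const1_def arity_def proj_def)
  moreover have "comp k (const1 b) [proj k 0] = mk k (\<lambda>_. b)"
    by (auto simp: comp_def mk_def const1_def proj_def fn_def)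
  ultimately show ?thesis by simp
qed

lemma mk_conj:
  assumes X: "partial_clone X" "conj2 \<in> X" and k: "1 \<le> k"
  shows "is \<noteq> [] \<Longrightarrow> set is \<subseteq> {..<k} \<Longrightarrow> mk k (\<lambda>xs. \<forall>i\<in>set is. xs!i) \<in> X"
proof (induction "is")
  case Nil then show ?case by simp
next
  case (Cons i js)
  have ik: "i < k" using Cons.prems by simp
  have pi: "proj k i \<in> X" using clone_proj[OF X(1) k ik] .
  show ?case
  proof (cases "js = []")
    case True
    have "proj k i = mk k (\<lambda>xs. \<forall>j\<in>set (i#js). xs!j)"
      using True by (auto simp: mk_def proj_def)
    then show ?thesis using pi by simp
  next
    case False
    have IH: "mk k (\<lambda>xs. \<forall>j\<in>set js. xs!j) \<in> X" using Cons False by simp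
    have "comp k conj2 [proj k i, mk k (\<lambda>xs. \<forall>j\<in>set js. xs!j)] \<in> X"
      using X k pi IH
      by (intro clone_comp) (auto simp: conj2_def arity_def proj_def mk_def)
    moreover have "comp k conj2 [proj k i, mk k (\<lambda>xs. \<forall>j\<in>set js. xs!j)] = mk k (\<lambda>xs. \<forall>j\<in>set (i#js). xs!j)"
      by (auto simp: comp_def mk_def conj2_def proj_def fn_def)
    ultimately show ?thesis by simp
  qed
qed

lemma total_in_Lambda:
  assumes fO: "f \<in> O2" and fH: "pres f H"
  shows "f \<in> Lambda"
proof -
  define k where "k = arity f"
  have k1: "1 \<le> k" using fO by (simp add: O2_def P2_def k_def)
  define v where "v xs = the (fn f xs)" for xs
  have dom: "fn f xs \<noteq> None \<longleftrightarrow> length xs = k" for xs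
    using fO unfolding O2_def P2_def k_def by blast
  have feq: "f = mk k v"
  proof -
    have "fst f = k" by (simp add: k_def arity_def)
    moreover have "snd f = (\<lambda>xs. if length xs = k then Some (v xs) else None)"
    proof
      fix xs show "snd f xs = (if length xs = k then Some (v xs) else None)"
        using dom[of xs] by (auto simp: v_def fn_def)
    qed
    ultimately show ?thesis by (simp add: mk_def prod_eq_iff)
  qed
  have Hp: "v x0" if l: "length x0 = k" "length x1 = k" "length x2 = k"
      and le: "\<forall>c<k. x1!c \<and> x2!c \<longrightarrow> x0!c" and v12: "v x1" "v x2" for x0 x1 x2
  proof -
    define r where "r = (\<lambda>i::nat. if i = 1 then x1 else if i = 2 then x2 else x0)"
    have "(\<lambda>i. the (fn f (r i))) \<in> H"
      using fH unfolding pres_def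
    proof (elim allE impE)
      show "\<forall>i. fn f (r i) \<noteq> None" using l dom by (simp add: r_def)
      show "\<forall>c<arity f. (\<lambda>i. r i ! c) \<in> H" using le by (simp add: r_def H_def k_def)
    qed
    then show ?thesis using v12 by (simp add: H_def r_def v_def)
  qed
  have mono: "v y" if "length x = k" "length y = k" "\<forall>c<k. x!c \<longrightarrow> y!c" "v x" for x y
    using Hp[of y x x] that by blast
  define one where "one = replicate k True"
  have gens: "partial_clone X \<Longrightarrow> {conj2, const1 False, const1 True} \<subseteq> X \<Longrightarrow> f \<in> X" for X
  proof -
    assume X: "partial_clone X" "{conj2, const1 False, const1 True} \<subseteq> X"
    show "f \<in> X"
    proof (cases "v one")
      case False
      have "\<not> v xs" if "length xs = k" for xs
        using mono[of xs one] False that by (auto simp: one_def)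
      then have "f = mk k (\<lambda>_. False)" using feq by (auto simp: mk_def)
      then show ?thesis using mk_const[OF X(1) _ k1, of False] X(2) by simp
    next
      case True
      define ee where "ee i = one[i := False]" for i
      have lee: "length (ee i) = k" for i by (simp add: ee_def one_def)
      have eec: "c < k \<Longrightarrow> ee i ! c = (c \<noteq> i)" for i c by (cases "c = i") (simp_all add: ee_def one_def)
      define A where "A = {i. i<k \<and> \<not> v (ee i)}"
      define mz where "mz Z = map (\<lambda>c. c \<notin> Z) [0..<k]" for Z
      have mzv: "finite Z \<Longrightarrow> Z \<subseteq> {..<k} - A \<Longrightarrow> v (mz Z)" for Z
      proof (induction Z rule: finite_induct)
        case empty
        have "mz {} = one" by (simp add: mz_def one_def map_replicate_const)
        then show ?case using True by simp
      next
        case (insert i Z)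
        have i: "i < k" "v (ee i)" using insert.prems by (auto simp: A_def)
        have "v (mz Z)" using insert by simp
        then show ?case
          using Hp[of "mz (insert i Z)" "ee i" "mz Z"] i lee eec by (auto simp: mz_def)
      qed
      have char: "v xs = (\<forall>i\<in>A. xs!i)" if lx: "length xs = k" for xs
      proof
        assume vx: "v xs"
        show "\<forall>i\<in>A. xs!i"
        proof (rule ccontr)
          assume "\<not> (\<forall>i\<in>A. xs!i)"
          then obtain i where i: "i \<in> A" "\<not> xs!i" by blast
          have "v (ee i)" using mono[of xs "ee i"] lx lee eec vx i by auto
          then show False using i by (simp add: A_def)
        qed
      next
        assume a: "\<forall>i\<in>A. xs!i"
        have "xs = mz {c. c<k \<and> \<not> xs!c}" using lx by (auto simp: mz_def list_eq_iff_nth_eq)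
        moreover have "v (mz {c. c<k \<and> \<not> xs!c})" using a by (intro mzv) auto
        ultimately show "v xs" by simp
      qed
      show ?thesis
      proof (cases "A = {}")
        case True
        then have "f = mk k (\<lambda>_. True)" using feq char by (auto simp: mk_def)
        then show ?thesis using mk_const[OF X(1) _ k1, of True] X(2) by simp
      next
        case False
        have fA: "finite A" by (simp add: A_def)
        have "f = mk k (\<lambda>xs. \<forall>i\<in>set (sorted_list_of_set A). xs!i)"
          using feq char fA by (auto simp: mk_def)
        moreover have "mk k (\<lambda>xs. \<forall>i\<in>set (sorted_list_of_set A). xs!i) \<in> X"
        proof (rule mk_conj[OF X(1) _ k1])
          show "conj2 \<in> X" using X(2) by simp
          show "sorted_list_of_set A \<noteq> []" using False fA by simp
          show "set (sorted_list_of_set A) \<subseteq> {..<k}" using fA by (auto simp: A_def)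
        qed
        ultimately show ?thesis by simp
      qed
    qed
  qed
  then show ?thesis unfolding Lambda_def clone_gen_def by blast
qed

lemma XS_in: "XS S \<in> I_str Lambda"
  unfolding I_str_def
proof (intro CollectI conjI)
  show "partial_clone (XS S)" by (rule XS_clone)
  show "strong (XS S)" by (rule XS_strong)
  show "XS S \<inter> O2 = Lambda"
  proof
    show "XS S \<inter> O2 \<subseteq> Lambda" using total_in_Lambda by (auto simp: XS_def)
    show "Lambda \<subseteq> XS S \<inter> O2" using Lambda_sub_XS Lambda_sub_O2 by blast
  qed
qed

lemma fz_in_XS: "fz (n+5) \<in> XS S \<longleftrightarrow> n \<in> S"
proof
  assume "fz (n+5) \<in> XS S"
  then have "\<forall>m. m \<notin> S \<longrightarrow> pres (fz (n+5)) (rho (m+5))" by (simp add: XS_def)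
  then show "n \<in> S" using not_pres_fz[of "n+5"] by auto
next
  assume nS: "n \<in> S"
  have "pres (fz (n+5)) (rho (m+5))" if "m \<notin> S" for m
    using nS that by (intro pres_fz_rho) auto
  then show "fz (n+5) \<in> XS S" using fz_P2[of "n+5"] pres_fz_H[of "n+5"] by (simp add: XS_def)
qed

lemma XS_inj: "inj XS"
proof (rule injI)
  fix S T assume "XS S = XS T"
  then show "S = T" using fz_in_XS by (metis subsetI subset_antisym)
qed

definition code :: "pfun \<Rightarrow> nat" where
  "code p = to_nat (arity p, map (fn p) (List.n_lists (arity p) [True, False]))"

lemma code_inj: "inj_on code P2"
proof (rule inj_onI)
  fix p q assume p: "p \<in> P2" and q: "q \<in> P2" and e: "code p = code q"
  then have a: "arity p = arity q" and m: "map (fn p) (List.n_lists (arity p) [True, False]) = map (fn q) (List.n_lists (arity p) [True, False])"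
    unfolding code_def by (auto dest: injD[OF inj_to_nat])
  have "fn p xs = fn q xs" for xs
  proof (cases "length xs = arity p")
    case True
    then have "xs \<in> set (List.n_lists (arity p) [True, False])" by (auto simp: set_n_lists)
    then show ?thesis using m by (simp add: map_eq_conv)
  next
    case False
    have "fn p xs = None" using p False unfolding P2_def by auto
    moreover have "fn q xs = None" using q False a unfolding P2_def by auto
    ultimately show ?thesis by simp
  qed
  then have "snd p = snd q" by (auto simp: fn_def)
  moreover have "fst p = fst q" using a by (simp add: arity_def)
  ultimately show "p = q" by (simp add: prod_eq_iff)
qed

theorem mainTheorem5:
  shows "I_str Lambda \<approx> (UNIV :: real set)"
proof -
  have up: "I_str Lambda \<lesssim> (UNIV :: nat set set)"
    unfolding lepoll_def'
  proof (intro exI conjI)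
    have "I_str Lambda \<subseteq> Pow P2" by (auto simp: I_str_def partial_clone_def)
    then show "inj_on (image code) (I_str Lambda)" using inj_on_image_Pow[OF code_inj] inj_on_subset by blast
    show "image code \<in> I_str Lambda \<rightarrow> UNIV" by simp
  qed
  have low: "(UNIV :: nat set set) \<lesssim> I_str Lambda"
    unfolding lepoll_def'
  proof (intro exI conjI)
    show "inj_on XS UNIV" using XS_inj by simp
    show "XS \<in> UNIV \<rightarrow> I_str Lambda" using XS_in by simp
  qed
  have "I_str Lambda \<approx> (UNIV :: nat set set)" using lepoll_antisym[OF up low] .
  then show ?thesis using nat_sets_eqpoll_reals eqpoll_trans by blast
qed

end
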